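(* Consider the composite problem, the Stochastic Decoupling Method and the gradient-estimator condition described in the context. Assume $f$ is $L$-smooth and $\mu$-strongly convex, and $g_1,\dots,g_m,R$ are proper, closed and convex. Suppose that $v^t$ is generated by a method that satisfies the gradient-estimator condition with constants $\eta_0>0$, $\omega>0$ and a nonnegative sequence $\{\mathcal M^t\}_{t\ge0}$, and that $\eta\le\eta_0$. Then for every $t\ge1$, $$\mathbb{E}\, D_f(\overline x^t,x^* )\le \frac{1}{\omega\eta t}\mathcal L^0,$$ where $\overline x^t:=\frac1t\sum_{k=0}^{t-1}x^k$ and $\mathcal L^0:=\|x^0-x^*\|^2+\mathcal M^0+\sum_{k=1}^m\eta_k^2\|y_k^0-y_k^*\|^2$.
   Context: Problem: $\min_{x\in\mathbb{R}^d}F(x):=f(x)+\frac1m\sum_{j=1}^m g_j(x)+R(x)$, where $f:\mathbb{R}^d\to\mathbb{R}$ is differentiable and convex, and $g_1,\dots,g_m,R:\mathbb{R}^d\to\mathbb{R}\cup\{+\infty\}$ are proper closed convex functions; the set of minimizers of $F$ is nonempty. $f$ is $L$-smooth if $f(x)\le f(y)+\langle\nabla f(y),x-y\rangle+\frac L2\|x-y\|^2$ for all $x,y$, and $\mu$-strongly convex ($\mu\ge0$) if $f(x)\ge f(y)+\langle\nabla f(y),x-y\rangle+\frac\mu2\|x-y\|^2$ for all $x,y$. Bregman divergence: $D_f(x,y):=f(x)-f(y)-\langle\nabla f(y),x-y\rangle$. Proximal operator: $\mathrm{prox}_{\eta h}(x):=\arg\min_u\{h(u)+\frac1{2\eta}\|u-x\|^2\}$.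 Standing optimality assumption: there exist a minimizer $x^*$ of $F$, vectors $y_j^*\in\partial g_j(x^* )$ ($j=1,\dots,m$) and $r^*\in\partial R(x^* )$ with $\nabla f(x^* )+\frac1m\sum_j y_j^*+r^*=0$; these are fixed, and $y^*:=\frac1m\sum_j y_j^*$. Stochastic Decoupling Method: stepsize $\eta>0$, probabilities $p_1,\dots,p_m>0$ summing to $1$, $\eta_j:=\eta/(mp_j)$. Start from deterministic $x^0,y_1^0,\dots,y_m^0\in\mathbb{R}^d$, $y^0:=\frac1m\sum_j y_j^0$. For $t=0,1,\dots$: a vector $v^t$ (an estimate of $\nabla f(x^t)$) is produced by a gradient estimator; $z^t=\mathrm{prox}_{\eta R}(x^t-\eta v^t-\eta y^t)$; an index $j$ is drawn with $\Pr(j=k)=p_k$, independently of the past; $x^{t+1}=\mathrm{prox}_{\eta_j g_j}(z^t+\eta_j y_j^t)$; $y_j^{t+1}=y_j^t+\frac1{\eta_j}(z^t-x^{t+1})$ and $y_k^{t+1}=y_k^t$ for $k\ne j$; $y^{t+1}=y^t+\frac1m(y_j^{t+1}-y_j^t)$. Gradient-estimator condition: with $w^t:=x^t-\eta v^t$ and $w^*:=x^*-\eta\nabla f(x^* )$, there are constants $\eta_0>0$, $\omega>0$ and a nonnegative sequence $\{\mathcal M^t\}$ such that for any $\eta\le\eta_0$ and all $t$: (a) if $f$ is convex, $\mathbb{E}\|w^t-w^*\|^2+\mathcal M^{t+1}\le\mathbb{E}\|x^t-x^*\|^2-\omega\eta\,\mathbb{E}D_f(x^t,x^* )+\mathcal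 M^t$; (b) if $f$ is $\mu$-strongly convex, either $\mathcal M^t=0$ for all $t$, or there is $\rho>0$ with $\mathbb{E}\|w^t-w^*\|^2+\mathcal M^{t+1}\le(1-\omega\eta\mu)\mathbb{E}\|x^t-x^*\|^2+(1-\rho)\mathcal M^t$. *)

theory Defs
  imports "HOL-Probability.Probability"
begin

definition proper_fun :: "('d \<Rightarrow> ereal) \<Rightarrow> bool" where
  "proper_fun h \<longleftrightarrow> (\<forall>x. h x \<noteq> -\<infinity>) \<and> (\<exists>x. h x \<noteq> \<infinity>)"

definition closed_fun :: "('d::topological_space \<Rightarrow> ereal) \<Rightarrow> bool" where
  "closed_fun h \<longleftrightarrow> closed {(x, r::real). h x \<le> ereal r}"

definition convex_fun :: "('d::real_vector \<Rightarrow> ereal) \<Rightarrow> bool" where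
  "convex_fun h \<longleftrightarrow> (\<forall>x y. \<forall>a::real. 0 \<le> a \<and> a \<le> 1 \<longrightarrow>
      h ((1 - a) *\<^sub>R x + a *\<^sub>R y) \<le> ereal (1 - a) * h x + ereal a * h y)"

definition subgrad :: "('d::real_inner \<Rightarrow> ereal) \<Rightarrow> 'd \<Rightarrow> 'd \<Rightarrow> bool" where
  "subgrad h x y \<longleftrightarrow> h x < \<infinity> \<and> (\<forall>u. h x + ereal (y \<bullet> (u - x)) \<le> h u)"

(* the set argmin_u { h u + ||u - x||^2 / (2 eta) }; prox_{eta h}(x) is its (unique) element *)
definition prox_set :: "real \<Rightarrow> ('d::real_normed_vector \<Rightarrow> ereal) \<Rightarrow> 'd \<Rightarrow> 'd set" where
  "prox_set \<eta> h x = {u. \<forall>w. h u + ereal ((norm (u - x))\<^sup>2 / (2 * \<eta>))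
                              \<le> h w + ereal ((norm (w - x))\<^sup>2 / (2 * \<eta>))}"

definition L_smooth :: "real \<Rightarrow> ('d::real_inner \<Rightarrow> real) \<Rightarrow> ('d \<Rightarrow> 'd) \<Rightarrow> bool" where
  "L_smooth L f gradf \<longleftrightarrow>
     (\<forall>x y. f x \<le> f y + gradf y \<bullet> (x - y) + L / 2 * (norm (x - y))\<^sup>2)"

definition strongly_convex :: "real \<Rightarrow> ('d::real_inner \<Rightarrow> real) \<Rightarrow> ('d \<Rightarrow> 'd) \<Rightarrow> bool" where
  "strongly_convex \<mu> f gradf \<longleftrightarrow>
     (\<forall>x y. f x \<ge> f y + gradf y \<bullet> (x - y) + \<mu> / 2 * (norm (x - y))\<^sup>2)"

definition bregman :: "('d::real_inner \<Rightarrow> real) \<Rightarrow> ('d \<Rightarrow> 'd) \<Rightarrow> 'd \<Rightarrow> 'd \<Rightarrow> real" where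
  "bregman f gradf x y = f x - f y - gradf y \<bullet> (x - y)"

definition Fobj :: "('d \<Rightarrow> real) \<Rightarrow> nat \<Rightarrow> (nat \<Rightarrow> 'd \<Rightarrow> ereal) \<Rightarrow> ('d \<Rightarrow> ereal) \<Rightarrow> 'd \<Rightarrow> ereal" where
  "Fobj f m g R x = ereal (f x) + ereal (1 / real m) * (\<Sum>j\<in>{1..m}. g j x) + R x"

end

theory Submission
  imports Defs
begin


lemma norm_add_sq: "(norm (x + y))\<^sup>2 = (norm x)\<^sup>2 + 2*(x\<bullet>y) + (norm (y::'a::real_inner))\<^sup>2"
  by (simp add: power2_norm_eq_inner inner_add_left inner_add_right inner_commute)

lemma norm_diff_sq: "(norm (x - y))\<^sup>2 = (norm x)\<^sup>2 - 2*(x\<bullet>y) + (norm (y::'a::real_inner))\<^sup>2"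
  by (simp add: power2_norm_eq_inner inner_diff_left inner_diff_right inner_commute)

lemma prox_subgrad:
  fixes h :: "'d::real_inner \<Rightarrow> ereal"
  assumes pr: "proper_fun h" and cv: "convex_fun h" and eta: "0 < \<eta>" and u: "u \<in> prox_set \<eta> h q"
  shows "h u \<noteq> \<infinity> \<and> h u \<noteq> -\<infinity> \<and> (\<forall>w. h u + ereal ((1/\<eta>) * ((q - u) \<bullet> (w - u))) \<le> h w)"
proof -
  have uineq: "\<And>w. h u + ereal ((norm (u - q))\<^sup>2 / (2 * \<eta>)) \<le> h w + ereal ((norm (w - q))\<^sup>2 / (2 * \<eta>))"
    using u unfolding prox_set_def by auto
  obtain x0 where x0: "h x0 \<noteq> \<infinity>" using pr unfolding proper_fun_def by auto
  have ninf: "\<And>x. h x \<noteq> -\<infinity>" using pr unfolding proper_fun_def by auto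
  have "h u + ereal ((norm (u - q))\<^sup>2 / (2 * \<eta>)) \<noteq> \<infinity>"
  proof
    assume "h u + ereal ((norm (u - q))\<^sup>2 / (2 * \<eta>)) = \<infinity>"
    then have "h x0 + ereal ((norm (x0 - q))\<^sup>2 / (2 * \<eta>)) = \<infinity>" using uineq[of x0] by simp
    then show False using x0 ninf[of x0] by (cases "h x0") auto
  qed
  then have hu_fin: "h u \<noteq> \<infinity>" by auto
  have main: "h u + ereal ((1/\<eta>) * ((q - u) \<bullet> (w - u))) \<le> h w" for w
  proof (cases "h w = \<infinity>")
    case True then show ?thesis by simp
  next
    case False
    obtain hu where hu: "h u = ereal hu" using hu_fin ninf[of u] by (cases "h u") auto
    obtain hw where hw: "h w = ereal hw" using False ninf[of w] by (cases "h w") auto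
    define e where "e = (norm (w - u))\<^sup>2 / (2 * \<eta>)"
    define c where "c = hu + (1/\<eta>) * ((q - u) \<bullet> (w - u)) - hw"
    have e0: "0 \<le> e" unfolding e_def using eta by simp
    have ca: "c \<le> a * e" if a: "0 < a" "a \<le> 1" for a
    proof -
      define wa where "wa = (1 - a) *\<^sub>R u + a *\<^sub>R w"
      have c1: "h wa \<le> ereal ((1 - a) * hu + a * hw)"
        using cv a unfolding convex_fun_def wa_def
        by (metis hu hw less_eq_real_def times_ereal.simps(1) plus_ereal.simps(1))
      have c2: "h u + ereal ((norm (u - q))\<^sup>2 / (2 * \<eta>)) \<le> h wa + ereal ((norm (wa - q))\<^sup>2 / (2 * \<eta>))"
        by (rule uineq)
      have "hu + (norm (u - q))\<^sup>2 / (2 * \<eta>) \<le> (1 - a) * hu + a * hw + (norm (wa - q))\<^sup>2 / (2 * \<eta>)"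
      proof -
        have "ereal (hu + (norm (u - q))\<^sup>2 / (2 * \<eta>)) \<le> h wa + ereal ((norm (wa - q))\<^sup>2 / (2 * \<eta>))"
          using c2 hu by simp
        also have "\<dots> \<le> ereal ((1 - a) * hu + a * hw) + ereal ((norm (wa - q))\<^sup>2 / (2 * \<eta>))"
          using add_right_mono[OF c1, of "ereal ((norm (wa - q))\<^sup>2 / (2 * \<eta>))"] by simp
        finally show ?thesis by simp
      qed
      moreover have "(norm (wa - q))\<^sup>2 = (norm (u - q))\<^sup>2 + 2 * a * ((u - q) \<bullet> (w - u)) + a\<^sup>2 * (norm (w - u))\<^sup>2"
      proof -
        have "wa - q = (u - q) + a *\<^sub>R (w - u)" unfolding wa_def by (simp add: algebra_simps)
        then have "(norm (wa - q))\<^sup>2 = (norm (u-q))\<^sup>2 + 2*((u-q) \<bullet> (a*\<^sub>R(w-u))) + (norm (a*\<^sub>R(w-u)))\<^sup>2"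
          by (simp only: norm_add_sq)
        then show ?thesis by (simp add: power_mult_distrib)
      qed
      moreover have "(norm (wa - q))\<^sup>2 / (2 * \<eta>) = (norm (u - q))\<^sup>2 / (2 * \<eta>) + (2 * a * ((u - q) \<bullet> (w - u)) + a\<^sup>2 * (norm (w - u))\<^sup>2) / (2 * \<eta>)"
        by (subst calculation(2)) (simp add: add_divide_distrib)
      moreover have "(1 - a) * hu = hu - a * hu" by (simp add: algebra_simps)
      ultimately have "a * hu \<le> a * hw + (2 * a * ((u - q) \<bullet> (w - u)) + a\<^sup>2 * (norm (w - u))\<^sup>2) / (2 * \<eta>)"
        by linarith
      moreover have "a * hw + (2 * a * ((u - q) \<bullet> (w - u)) + a\<^sup>2 * (norm (w - u))\<^sup>2) / (2 * \<eta>)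
          = a * (hw + ((u - q) \<bullet> (w - u)) / \<eta> + a * e)"
        using eta unfolding e_def by (simp add: field_simps power2_eq_square)
      ultimately have "a * hu \<le> a * (hw + ((u - q) \<bullet> (w - u)) / \<eta> + a * e)"
        by linarith
      then have "hu \<le> hw + ((u - q) \<bullet> (w - u)) / \<eta> + a * e" using a by simp
      moreover have "(1/\<eta>) * ((q - u) \<bullet> (w - u)) = - (((u - q) \<bullet> (w - u)) / \<eta>)"
        by (simp add: inner_diff_left diff_divide_distrib)
      ultimately show ?thesis unfolding c_def by simp
    qed
    have "c \<le> 0"
    proof (rule ccontr)
      assume "\<not> c \<le> 0"
      then have cp: "0 < c" by simp
      define a where "a = min 1 (c / (2 * e + 1))"
      have a0: "0 < a" "a \<le> 1" unfolding a_def using cp e0 by auto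
      have "a * e \<le> c / (2 * e + 1) * e" unfolding a_def using e0 by (intro mult_right_mono) auto
      also have "\<dots> < c" using cp e0 by (simp add: field_simps add_pos_nonneg)
      finally show False using ca[OF a0] by simp
    qed
    then show ?thesis unfolding c_def using hu hw by simp
  qed
  show ?thesis using hu_fin ninf main by blast
qed



lemma subgrad_mono:
  fixes h :: "'d::real_inner \<Rightarrow> ereal"
  assumes "h u1 \<noteq> \<infinity>" "h u1 \<noteq> -\<infinity>" "h u2 \<noteq> \<infinity>" "h u2 \<noteq> -\<infinity>"
    and s1: "\<And>w. h u1 + ereal (g1 \<bullet> (w - u1)) \<le> h w"
    and s2: "\<And>w. h u2 + ereal (g2 \<bullet> (w - u2)) \<le> h w"
  shows "0 \<le> (g1 - g2) \<bullet> (u1 - u2)"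
proof -
  obtain a1 where a1: "h u1 = ereal a1" using assms by (cases "h u1") auto
  obtain a2 where a2: "h u2 = ereal a2" using assms by (cases "h u2") auto
  have "a1 + g1 \<bullet> (u2 - u1) \<le> a2" using s1[of u2] a1 a2 by simp
  moreover have "a2 + g2 \<bullet> (u1 - u2) \<le> a1" using s2[of u1] a1 a2 by simp
  ultimately have "0 \<le> - (g1 \<bullet> (u2 - u1)) - g2 \<bullet> (u1 - u2)" by linarith
  moreover have "g1 \<bullet> (u2 - u1) = - (g1 \<bullet> (u1 - u2))"
    by (metis inner_minus_right minus_diff_eq)
  ultimately show ?thesis by (simp add: inner_diff_left)
qed

lemma zstep_alg:
  fixes u d e :: "'a::real_inner"
  assumes "(norm u)\<^sup>2 \<le> d \<bullet> u"
  shows "(norm u)\<^sup>2 + 2 * (u \<bullet> (e - d)) \<le> (norm e)\<^sup>2"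
proof -
  have "0 \<le> (norm (u - e))\<^sup>2" by simp
  then have "0 \<le> (norm u)\<^sup>2 - 2 * (u \<bullet> e) + (norm e)\<^sup>2" by (simp only: norm_diff_sq)
  moreover have "u \<bullet> (e - d) = u \<bullet> e - u \<bullet> d" by (simp add: inner_diff_right)
  moreover have "u \<bullet> d = d \<bullet> u" by (simp add: inner_commute)
  ultimately show ?thesis using assms by linarith
qed

lemma xstep_alg:
  fixes A B C :: "'a::real_inner" and c :: real
  assumes "0 \<le> (A + c *\<^sub>R B - c *\<^sub>R C) \<bullet> C" "0 < c"
  shows "(norm (A + c *\<^sub>R B - c *\<^sub>R C))\<^sup>2 + c\<^sup>2 * (norm C)\<^sup>2
     \<le> (norm A)\<^sup>2 + 2 * c * (A \<bullet> B) + c\<^sup>2 * (norm B)\<^sup>2"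
proof -
  define P where "P = A + c *\<^sub>R B"
  have f1: "(norm (P - c *\<^sub>R C))\<^sup>2 = (norm P)\<^sup>2 - 2 * (c * (P \<bullet> C)) + c\<^sup>2 * (norm C)\<^sup>2"
    using norm_diff_sq[of P "c *\<^sub>R C"] by (simp add: power_mult_distrib)
  have f2: "(norm P)\<^sup>2 = (norm A)\<^sup>2 + 2 * (c * (A \<bullet> B)) + c\<^sup>2 * (norm B)\<^sup>2"
    using norm_add_sq[of A "c *\<^sub>R B"] unfolding P_def by (simp add: power_mult_distrib)
  have "c * ((P - c *\<^sub>R C) \<bullet> C) = c * (P \<bullet> C) - c\<^sup>2 * (norm C)\<^sup>2"
    by (simp add: inner_diff_left dot_square_norm right_diff_distrib power2_eq_square)
  moreover have "0 \<le> c * ((P - c *\<^sub>R C) \<bullet> C)" using assms unfolding P_def by simp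
  ultimately have f3: "c\<^sup>2 * (norm C)\<^sup>2 \<le> c * (P \<bullet> C)" by linarith
  have "(norm (P - c *\<^sub>R C))\<^sup>2 + c\<^sup>2 * (norm C)\<^sup>2
     \<le> (norm A)\<^sup>2 + 2 * (c * (A \<bullet> B)) + c\<^sup>2 * (norm B)\<^sup>2"
    using f1 f2 f3 by linarith
  then show ?thesis unfolding P_def by (simp add: mult.assoc)
qed


lemma lipschitz_measurable:
  fixes q :: "'s \<Rightarrow> 'a::metric_space" and Z :: "'s \<Rightarrow> 'b::metric_space"
  assumes q: "q \<in> borel_measurable F"
    and lip: "\<And>s1 s2. s1 \<in> space F \<Longrightarrow> s2 \<in> space F \<Longrightarrow> dist (Z s1) (Z s2) \<le> dist (q s1) (q s2)"
  shows "Z \<in> borel_measurable F"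
proof (rule borel_measurableI)
  define Q where "Q = q ` space F"
  define P where "P a = Z (SOME s. s \<in> space F \<and> q s = a)" for a
  have PZ: "P (q s) = Z s" if "s \<in> space F" for s
  proof -
    have "\<exists>s'. s' \<in> space F \<and> q s' = q s" using that by blast
    then have "(SOME s'. s' \<in> space F \<and> q s' = q s) \<in> space F \<and> q (SOME s'. s' \<in> space F \<and> q s' = q s) = q s"
      by (rule someI_ex)
    then show ?thesis unfolding P_def using lip[OF _ that, of "SOME s'. s' \<in> space F \<and> q s' = q s"] by simp
  qed
  have "lipschitz_on 1 Q P"
    unfolding lipschitz_on_def Q_def using lip PZ by auto
  then have cont: "continuous_on Q P" by (rule lipschitz_on_continuous_on)
  fix S :: "'b set" assume "open S"
  then obtain T where T: "open T" "T \<inter> Q = P -` S \<inter> Q"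
    using cont unfolding continuous_on_open_invariant by blast
  have "Z -` S \<inter> space F = q -` T \<inter> space F"
  proof -
    have "Z s \<in> S \<longleftrightarrow> q s \<in> T" if "s \<in> space F" for s
    proof -
      have "q s \<in> Q" using that unfolding Q_def by auto
      then have "Z s \<in> S \<longleftrightarrow> q s \<in> P -` S \<inter> Q" using PZ[OF that] by simp
      also have "\<dots> \<longleftrightarrow> q s \<in> T \<inter> Q" using T(2) by simp
      finally show ?thesis using \<open>q s \<in> Q\<close> by blast
    qed
    then show ?thesis by auto
  qed
  also have "\<dots> \<in> sets F" using q T(1) by (simp add: measurable_sets borel_open)
  finally show "Z -` S \<inter> space F \<in> sets F" .
qed


lemma exp_indep:
  fixes \<phi> :: "'s \<Rightarrow> real"
  assumes M: "prob_space M" and sub: "subalgebra M F" and A: "A \<in> sets M"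
    and ind: "\<And>B. B \<in> sets F \<Longrightarrow> measure M (B \<inter> A) = measure M B * pk"
    and pk: "0 \<le> pk" and phi: "\<phi> \<in> borel_measurable F"
  shows "(\<integral>s. \<phi> s * indicator A s \<partial>M) = pk * (\<integral>s. \<phi> s \<partial>M)"
proof -
  interpret prob_space M by (rule M)
  have phiM: "\<phi> \<in> borel_measurable M" using measurable_from_subalg[OF sub phi] .
  define D where "D = density M (\<lambda>s. ennreal (indicator A s))"
  have subD: "subalgebra D F" using sub unfolding D_def subalgebra_def by simp
  define M' where "M' = restr_to_subalg M F"
  have eq: "restr_to_subalg D F = density M' (\<lambda>_. ennreal pk)"
  proof (rule measure_eqI)
    show "sets (restr_to_subalg D F) = sets (density M' (\<lambda>_. ennreal pk))"
      unfolding M'_def using sub subD by (simp add: sets_restr_to_subalg)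
    fix B assume "B \<in> sets (restr_to_subalg D F)"
    then have B: "B \<in> sets F" using subD by (simp add: sets_restr_to_subalg)
    then have BM: "B \<in> sets M" using sub unfolding subalgebra_def by auto
    have "emeasure (restr_to_subalg D F) B = emeasure D B"
      using emeasure_restr_to_subalg[OF subD B] .
    also have "\<dots> = (\<integral>\<^sup>+x. ennreal (indicator A x) * indicator B x \<partial>M)"
      unfolding D_def using A BM by (intro emeasure_density) auto
    also have "\<dots> = (\<integral>\<^sup>+x. indicator (B \<inter> A) x \<partial>M)"
      by (intro nn_integral_cong) (auto split: split_indicator)
    also have "\<dots> = emeasure M (B \<inter> A)"
      using A BM by simp
    also have "\<dots> = ennreal (measure M B * pk)"
      using ind[OF B] by (simp add: emeasure_eq_measure)
    also have "\<dots> = ennreal pk * emeasure M' B"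
      unfolding M'_def using emeasure_restr_to_subalg[OF sub B] pk
      by (simp add: emeasure_eq_measure ennreal_mult mult.commute)
    also have "\<dots> = emeasure (density M' (\<lambda>_. ennreal pk)) B"
    proof -
      have "B \<in> sets M'" unfolding M'_def using sub B by (simp add: sets_restr_to_subalg)
      then show ?thesis by (simp add: emeasure_density_const)
    qed
    finally show "emeasure (restr_to_subalg D F) B = emeasure (density M' (\<lambda>_. ennreal pk)) B" .
  qed
  have "(\<integral>s. \<phi> s * indicator A s \<partial>M) = (\<integral>s. indicator A s *\<^sub>R \<phi> s \<partial>M)"
    by (intro Bochner_Integration.integral_cong) (auto split: split_indicator)
  also have "\<dots> = (\<integral>s. \<phi> s \<partial>D)"
    unfolding D_def using phiM A by (intro integral_density[symmetric]) auto
  also have "\<dots> = (\<integral>s. \<phi> s \<partial>restr_to_subalg D F)"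
    using integral_subalgebra2[OF subD phi] by simp
  also have "\<dots> = (\<integral>s. \<phi> s \<partial>density M' (\<lambda>_. ennreal pk))" using eq by simp
  also have "\<dots> = (\<integral>s. pk * \<phi> s \<partial>M')"
  proof -
    have "\<phi> \<in> borel_measurable M'" unfolding M'_def using phi sub
      by (subst measurable_cong_sets[OF sets_restr_to_subalg[OF sub] refl]) (rule phi)
    then show ?thesis using pk integral_density[of \<phi> M' "\<lambda>_. pk"] by simp
  qed
  also have "\<dots> = pk * (\<integral>s. \<phi> s \<partial>M')" by simp
  also have "\<dots> = pk * (\<integral>s. \<phi> s \<partial>M)" unfolding M'_def using integral_subalgebra2[OF sub phi] by simp
  finally show ?thesis .
qed



definition L2 :: "'s measure \<Rightarrow> ('s \<Rightarrow> 'a::real_normed_vector) \<Rightarrow> bool" where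
  "L2 M f \<longleftrightarrow> f \<in> borel_measurable M \<and> integrable M (\<lambda>s. (norm (f s))\<^sup>2)"

lemma sq_add_le: "(norm (a + b))\<^sup>2 \<le> 2 * (norm a)\<^sup>2 + 2 * (norm (b::'a::real_normed_vector))\<^sup>2"
proof -
  have "norm (a + b) \<le> norm a + norm b" by (rule norm_triangle_ineq)
  then have "(norm (a + b))\<^sup>2 \<le> (norm a + norm b)\<^sup>2" by (simp add: power_mono)
  also have "\<dots> \<le> 2 * (norm a)\<^sup>2 + 2 * (norm b)\<^sup>2"
    using sum_squares_bound[of "norm a" "norm b"] by (simp add: power2_eq_square algebra_simps)
  finally show ?thesis .
qed

lemma L2_add:
  fixes f g :: "'s \<Rightarrow> 'a::{real_normed_vector, second_countable_topology}"
  assumes "L2 M f" "L2 M g" shows "L2 M (\<lambda>s. f s + g s)"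
proof -
  have m: "(\<lambda>s. f s + g s) \<in> borel_measurable M" using assms unfolding L2_def by auto
  have "integrable M (\<lambda>s. 2 * (norm (f s))\<^sup>2 + 2 * (norm (g s))\<^sup>2)"
    using assms unfolding L2_def by auto
  then have "integrable M (\<lambda>s. (norm (f s + g s))\<^sup>2)"
    by (rule Bochner_Integration.integrable_bound) (use m sq_add_le in auto)
  then show ?thesis using m unfolding L2_def by auto
qed

lemma L2_scaleR:
  fixes f :: "'s \<Rightarrow> 'a::{real_normed_vector, second_countable_topology}"
  assumes "L2 M f" shows "L2 M (\<lambda>s. c *\<^sub>R f s)"
  using assms unfolding L2_def by (auto simp: power_mult_distrib)

lemma L2_diff:
  fixes f g :: "'s \<Rightarrow> 'a::{real_normed_vector, second_countable_topology}"
  assumes "L2 M f" "L2 M g" shows "L2 M (\<lambda>s. f s - g s)"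
  using L2_add[OF assms(1) L2_scaleR[OF assms(2), of "-1"]] by simp

lemma L2_const:
  fixes c :: "'a::{real_normed_vector, second_countable_topology}"
  assumes "finite_measure M" shows "L2 M (\<lambda>s. c)"
  using finite_measure.integrable_const[OF assms] unfolding L2_def by auto

lemma L2_inner:
  fixes f g :: "'s \<Rightarrow> 'a::{real_inner, second_countable_topology}"
  assumes "L2 M f" "L2 M g" shows "integrable M (\<lambda>s. f s \<bullet> g s)"
proof -
  have m: "(\<lambda>s. f s \<bullet> g s) \<in> borel_measurable M" using assms unfolding L2_def by auto
  have i: "integrable M (\<lambda>s. (norm (f s))\<^sup>2 + (norm (g s))\<^sup>2)"
    using assms unfolding L2_def by auto
  have "norm (f s \<bullet> g s) \<le> norm ((norm (f s))\<^sup>2 + (norm (g s))\<^sup>2)" for s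
  proof -
    have "\<bar>f s \<bullet> g s\<bar> \<le> norm (f s) * norm (g s)" by (rule Cauchy_Schwarz_ineq2)
    also have "\<dots> \<le> (norm (f s))\<^sup>2 + (norm (g s))\<^sup>2"
      using sum_squares_bound[of "norm (f s)" "norm (g s)"] mult_nonneg_nonneg[OF norm_ge_zero norm_ge_zero, of "f s" "g s"]
      unfolding power2_eq_square by linarith
    finally show ?thesis by simp
  qed
  then show ?thesis by (intro Bochner_Integration.integrable_bound[OF i m]) auto
qed

lemma L2_dom:
  fixes Z :: "'s \<Rightarrow> 'a::{real_normed_vector, second_countable_topology}" and q :: "'s \<Rightarrow> 'b::{real_normed_vector, second_countable_topology}"
  assumes "L2 M q" "Z \<in> borel_measurable M" "\<And>s. s \<in> space M \<Longrightarrow> norm (Z s) \<le> norm (q s)"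
  shows "L2 M Z"
proof -
  have "integrable M (\<lambda>s. (norm (Z s))\<^sup>2)"
    by (rule Bochner_Integration.integrable_bound[of _ "\<lambda>s. (norm (q s))\<^sup>2"])
       (use assms in \<open>auto simp: L2_def intro!: AE_I2 power_mono\<close>)
  then show ?thesis using assms unfolding L2_def by auto
qed

lemma sq_le_dot:
  fixes u d :: "'a::real_inner"
  assumes "(norm u)\<^sup>2 \<le> d \<bullet> u" shows "norm u \<le> norm d"
proof (cases "norm u = 0")
  case True then show ?thesis by simp
next
  case False
  have "(norm u)\<^sup>2 \<le> norm d * norm u" using assms norm_cauchy_schwarz[of d u] by linarith
  then show ?thesis using False by (simp add: power2_eq_square)
qed



lemma jensen_breg:
  fixes f :: "'d::real_inner \<Rightarrow> real"
  assumes conv: "\<And>a b. f b + gradf b \<bullet> (a - b) \<le> f a" and t: "0 < t"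
  shows "bregman f gradf ((1 / real t) *\<^sub>R (\<Sum>k<t. X k)) xs \<le> (1 / real t) * (\<Sum>k<t. bregman f gradf (X k) xs)"
proof -
  define xb where "xb = (1 / real t) *\<^sub>R (\<Sum>k<t. X k)"
  have tx: "(\<Sum>k<t. X k) = real t *\<^sub>R xb" unfolding xb_def using t by simp
  have "(\<Sum>k<t. f xb + gradf xb \<bullet> (X k - xb)) \<le> (\<Sum>k<t. f (X k))"
    by (intro sum_mono conv)
  moreover have "(\<Sum>k<t. f xb + gradf xb \<bullet> (X k - xb)) = real t * f xb + gradf xb \<bullet> ((\<Sum>k<t. X k) - real t *\<^sub>R xb)"
    by (simp add: sum.distrib inner_sum_right[symmetric] sum_subtractf sum_constant_scaleR)
  ultimately have fx: "real t * f xb \<le> (\<Sum>k<t. f (X k))" unfolding tx by simp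
  have "(1 / real t) * (\<Sum>k<t. bregman f gradf (X k) xs)
      = (1 / real t) * (\<Sum>k<t. f (X k)) - f xs - gradf xs \<bullet> (xb - xs)"
  proof -
    have "(\<Sum>k<t. bregman f gradf (X k) xs) = (\<Sum>k<t. f (X k)) - real t * f xs - gradf xs \<bullet> ((\<Sum>k<t. X k) - real t *\<^sub>R xs)"
      unfolding bregman_def by (simp add: sum_subtractf inner_sum_right[symmetric] sum_constant_scaleR)
    also have "\<dots> = (\<Sum>k<t. f (X k)) - real t * f xs - real t * (gradf xs \<bullet> (xb - xs))"
      unfolding tx by (simp add: scaleR_diff_right[symmetric])
    finally show ?thesis using t by (simp add: field_simps)
  qed
  moreover have "f xb \<le> (1 / real t) * (\<Sum>k<t. f (X k))" using fx t by (simp add: field_simps)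
  ultimately show ?thesis unfolding bregman_def xb_def[symmetric] by linarith
qed



lemma prox_pair:
  fixes a1 a2 u1 u2 :: "'a::real_inner"
  assumes "0 < \<eta>" "0 \<le> ((1/\<eta>) *\<^sub>R (a1 - u1) - (1/\<eta>) *\<^sub>R (a2 - u2)) \<bullet> (u1 - u2)"
  shows "(norm (u1 - u2))\<^sup>2 \<le> (a1 - a2) \<bullet> (u1 - u2)"
proof -
  have "(1/\<eta>) *\<^sub>R (a1 - u1) - (1/\<eta>) *\<^sub>R (a2 - u2) = (1/\<eta>) *\<^sub>R ((a1 - a2) - (u1 - u2))"
    by (simp add: scaleR_diff_right algebra_simps)
  then have "0 \<le> (1/\<eta>) * (((a1 - a2) - (u1 - u2)) \<bullet> (u1 - u2))" using assms(2) by simp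
  then have "0 \<le> ((a1 - a2) - (u1 - u2)) \<bullet> (u1 - u2)" using assms(1)
    by (simp add: zero_le_divide_iff)
  then show ?thesis by (simp add: inner_diff_left dot_square_norm)
qed

lemma L2_sum:
  fixes f :: "'i \<Rightarrow> 's \<Rightarrow> 'a::{real_normed_vector, second_countable_topology}"
  assumes "finite_measure M" "finite I" "\<And>i. i \<in> I \<Longrightarrow> L2 M (f i)"
  shows "L2 M (\<lambda>s. \<Sum>i\<in>I. f i s)"
  using assms(2,3)
proof (induction I rule: finite_induct)
  case empty then show ?case using L2_const[OF assms(1), of 0] by simp
next
  case (insert i I)
  then show ?case using L2_add[where M=M and f="f i" and g="\<lambda>s. \<Sum>i\<in>I. f i s"] by (simp add: insert_iff)
qed

lemma L2_cong:
  assumes "\<And>s. s \<in> space M \<Longrightarrow> f s = g s" "L2 M f" shows "L2 M g"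
proof -
  have "g \<in> borel_measurable M" using assms measurable_cong[of M f g] unfolding L2_def by auto
  moreover have "integrable M (\<lambda>s. (norm (g s))\<^sup>2)"
    using assms Bochner_Integration.integrable_cong[where M=M and N=M and f="\<lambda>s. (norm (f s))\<^sup>2" and g="\<lambda>s. (norm (g s))\<^sup>2"] unfolding L2_def by auto
  ultimately show ?thesis unfolding L2_def by auto
qed


theorem theorem1:
  fixes f :: "'d::euclidean_space \<Rightarrow> real" and gradf :: "'d \<Rightarrow> 'd"
    and g :: "nat \<Rightarrow> 'd \<Rightarrow> ereal" and R :: "'d \<Rightarrow> ereal"
    and m :: nat and L \<mu> :: real
    and xstar rstar :: 'd and ystar :: "nat \<Rightarrow> 'd"
    and \<eta> \<eta>0 om :: real and p :: "nat \<Rightarrow> real" and Mseq :: "nat \<Rightarrow> real"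
    and Mprob :: "'s measure" and Fil :: "nat \<Rightarrow> 's measure"
    and x v z ybar :: "nat \<Rightarrow> 's \<Rightarrow> 'd" and y :: "nat \<Rightarrow> nat \<Rightarrow> 's \<Rightarrow> 'd"
    and J :: "nat \<Rightarrow> 's \<Rightarrow> nat"
    and x0 :: 'd and y0 :: "nat \<Rightarrow> 'd"
  assumes m_pos: "1 \<le> m"
    and f_grad: "\<And>u. (f has_derivative (\<lambda>h. gradf u \<bullet> h)) (at u)"
    and f_smooth: "L_smooth L f gradf"
    and mu_nonneg: "0 \<le> \<mu>"
    and f_sc: "strongly_convex \<mu> f gradf"
    and g_pcc: "\<And>j. j \<in> {1..m} \<Longrightarrow> proper_fun (g j) \<and> closed_fun (g j) \<and> convex_fun (g j)"
    and R_pcc: "proper_fun R \<and> closed_fun R \<and> convex_fun R"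
    and xstar_min: "\<And>u. Fobj f m g R xstar \<le> Fobj f m g R u"
    and ystar_sub: "\<And>j. j \<in> {1..m} \<Longrightarrow> subgrad (g j) xstar (ystar j)"
    and rstar_sub: "subgrad R xstar rstar"
    and opt: "gradf xstar + (1 / real m) *\<^sub>R (\<Sum>j\<in>{1..m}. ystar j) + rstar = 0"
    and eta_pos: "0 < \<eta>" and eta0_pos: "0 < \<eta>0" and eta_le: "\<eta> \<le> \<eta>0" and om_pos: "0 < om"
    and p_pos: "\<And>j. j \<in> {1..m} \<Longrightarrow> 0 < p j" and p_sum: "(\<Sum>j\<in>{1..m}. p j) = 1"
    and prob: "prob_space Mprob"
    and Fil_sub: "\<And>t. subalgebra Mprob (Fil t)"
    and Fil_mono: "\<And>t. sets (Fil t) \<subseteq> sets (Fil (Suc t))"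
    and x_meas: "\<And>t. x t \<in> borel_measurable (Fil t)"
    and v_meas: "\<And>t. v t \<in> borel_measurable (Fil t)"
    and y_meas: "\<And>t j. y t j \<in> borel_measurable (Fil t)"
    and J_meas: "\<And>t. J t \<in> measurable (Fil (Suc t)) (count_space UNIV)"
    and x_sq: "\<And>t. integrable Mprob (\<lambda>s. (norm (x t s))\<^sup>2)"
    and v_sq: "\<And>t. integrable Mprob (\<lambda>s. (norm (v t s))\<^sup>2)"
    and y_sq: "\<And>t j. integrable Mprob (\<lambda>s. (norm (y t j s))\<^sup>2)"
    and J_range: "\<And>t s. s \<in> space Mprob \<Longrightarrow> J t s \<in> {1..m}"
    and J_indep: "\<And>t k A. A \<in> sets (Fil t) \<Longrightarrow> k \<in> {1..m} \<Longrightarrow>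
        measure Mprob (A \<inter> {s \<in> space Mprob. J t s = k}) = measure Mprob A * p k"
    and x_init: "\<And>s. s \<in> space Mprob \<Longrightarrow> x 0 s = x0"
    and y_init: "\<And>j s. s \<in> space Mprob \<Longrightarrow> j \<in> {1..m} \<Longrightarrow> y 0 j s = y0 j"
    and ybar_init: "\<And>s. s \<in> space Mprob \<Longrightarrow> ybar 0 s = (1 / real m) *\<^sub>R (\<Sum>j\<in>{1..m}. y0 j)"
    and z_step: "\<And>t s. s \<in> space Mprob \<Longrightarrow>
        z t s \<in> prox_set \<eta> R (x t s - \<eta> *\<^sub>R v t s - \<eta> *\<^sub>R ybar t s)"
    and x_step: "\<And>t s. s \<in> space Mprob \<Longrightarrow>
        x (Suc t) s \<in> prox_set (\<eta> / (real m * p (J t s))) (g (J t s))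
                        (z t s + (\<eta> / (real m * p (J t s))) *\<^sub>R y t (J t s) s)"
    and y_step: "\<And>t j s. s \<in> space Mprob \<Longrightarrow> j \<in> {1..m} \<Longrightarrow>
        y (Suc t) j s = (if j = J t s
           then y t j s + (1 / (\<eta> / (real m * p j))) *\<^sub>R (z t s - x (Suc t) s)
           else y t j s)"
    and ybar_step: "\<And>t s. s \<in> space Mprob \<Longrightarrow>
        ybar (Suc t) s = ybar t s + (1 / real m) *\<^sub>R (y (Suc t) (J t s) s - y t (J t s) s)"
    and M_nonneg: "\<And>t. 0 \<le> Mseq t"
    and cond_a: "\<And>t.
        prob_space.expectation Mprob (\<lambda>s. (norm ((x t s - \<eta> *\<^sub>R v t s) - (xstar - \<eta> *\<^sub>R gradf xstar)))\<^sup>2)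
          + Mseq (Suc t)
        \<le> prob_space.expectation Mprob (\<lambda>s. (norm (x t s - xstar))\<^sup>2)
          - om * \<eta> * prob_space.expectation Mprob (\<lambda>s. bregman f gradf (x t s) xstar)
          + Mseq t"
    and cond_b: "(\<forall>t. Mseq t = 0) \<or> (\<exists>\<rho>>0. \<forall>t.
        prob_space.expectation Mprob (\<lambda>s. (norm ((x t s - \<eta> *\<^sub>R v t s) - (xstar - \<eta> *\<^sub>R gradf xstar)))\<^sup>2)
          + Mseq (Suc t)
        \<le> (1 - om * \<eta> * \<mu>) * prob_space.expectation Mprob (\<lambda>s. (norm (x t s - xstar))\<^sup>2)
          + (1 - \<rho>) * Mseq t)"
  shows "\<forall>t\<ge>1.
    prob_space.expectation Mprob
      (\<lambda>s. bregman f gradf ((1 / real t) *\<^sub>R (\<Sum>k<t. x k s)) xstar)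
    \<le> 1 / (om * \<eta> * real t) *
       ((norm (x0 - xstar))\<^sup>2 + Mseq 0
        + (\<Sum>k\<in>{1..m}. (\<eta> / (real m * p k))\<^sup>2 * (norm (y0 k - ystar k))\<^sup>2))"
proof -
  interpret P: prob_space Mprob by (rule prob)
  have fin: "finite_measure Mprob" by (rule P.finite_measure_axioms)
  have sp: "\<And>t. space (Fil t) = space Mprob" using Fil_sub unfolding subalgebra_def by auto
  have mF: "\<And>t h. h \<in> borel_measurable (Fil t) \<Longrightarrow> h \<in> borel_measurable Mprob"
    using measurable_from_subalg[OF Fil_sub] by blast
  define ek where "ek k = \<eta> / (real m * p k)" for k
  define ys where "ys = (1 / real m) *\<^sub>R (\<Sum>j\<in>{1..m}. ystar j)"
  define ws where "ws = xstar - \<eta> *\<^sub>R gradf xstar"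
  define q where "q t s = x t s - \<eta> *\<^sub>R v t s - \<eta> *\<^sub>R ybar t s" for t s
  define qs where "qs = ws - \<eta> *\<^sub>R ys"
  have m0: "0 < real m" using m_pos by simp
  have ek_pos: "\<And>k. k \<in> {1..m} \<Longrightarrow> 0 < ek k" unfolding ek_def using eta_pos m0 p_pos by simp
  have rstar_eq: "rstar = (1 / \<eta>) *\<^sub>R (qs - xstar)"
  proof -
    have h0: "gradf xstar + ys + rstar = 0" using opt unfolding ys_def by simp
    have "rstar = (gradf xstar + ys + rstar) - gradf xstar - ys" by (simp add: algebra_simps)
    then have "rstar = - gradf xstar - ys" using h0 by simp
    moreover have "qs - xstar = \<eta> *\<^sub>R (- gradf xstar - ys)" unfolding qs_def ws_def by (simp add: algebra_simps)
    ultimately show ?thesis using eta_pos by simp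
  qed
  have ybar_eq0: "\<forall>s\<in>space Mprob. ybar t s = (1 / real m) *\<^sub>R (\<Sum>j\<in>{1..m}. y t j s)" for t
  proof (induction t)
    case 0 then show ?case using ybar_init y_init by simp
  next
    case (Suc t)
    show ?case
    proof
    fix s assume s: "s \<in> space Mprob"
    define jj where "jj = J t s"
    have jj: "jj \<in> {1..m}" using J_range[OF s] unfolding jj_def .
    have "(\<Sum>j\<in>{1..m}. y (Suc t) j s) = (\<Sum>j\<in>{1..m}. y t j s + (if j = jj then y (Suc t) jj s - y t jj s else 0))"
      by (intro sum.cong) (auto simp: y_step[OF s] jj_def)
    also have "\<dots> = (\<Sum>j\<in>{1..m}. y t j s) + (y (Suc t) jj s - y t jj s)"
      using jj by (simp add: sum.distrib)
    finally show "ybar (Suc t) s = (1 / real m) *\<^sub>R (\<Sum>j\<in>{1..m}. y (Suc t) j s)"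
      using ybar_step[OF s] Suc.IH s
      by (simp add: scaleR_add_right jj_def)
    qed
  qed
  have ybar_eq: "\<And>t s. s \<in> space Mprob \<Longrightarrow> ybar t s = (1 / real m) *\<^sub>R (\<Sum>j\<in>{1..m}. y t j s)"
    using ybar_eq0 by blast

  note [measurable] = x_meas v_meas y_meas
  have ybar_meas[measurable]: "ybar t \<in> borel_measurable (Fil t)" for t
  proof -
    have "(\<lambda>s. (1/real m) *\<^sub>R (\<Sum>j\<in>{1..m}. y t j s)) \<in> borel_measurable (Fil t)" by measurable
    then show ?thesis using ybar_eq sp measurable_cong[of "Fil t" "ybar t"] by simp
  qed
  have q_meas[measurable]: "q t \<in> borel_measurable (Fil t)" for t unfolding q_def by measurable
  have Rprops: "R xstar \<noteq> \<infinity>" "R xstar \<noteq> -\<infinity>" "\<And>w. R xstar + ereal (rstar \<bullet> (w - xstar)) \<le> R w"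
    using rstar_sub R_pcc unfolding subgrad_def proper_fun_def by auto
  have zsub: "R (z t s) \<noteq> \<infinity> \<and> R (z t s) \<noteq> -\<infinity> \<and> (\<forall>w. R (z t s) + ereal (((1/\<eta>) *\<^sub>R (q t s - z t s)) \<bullet> (w - z t s)) \<le> R w)"
    if s: "s \<in> space Mprob" for t s
  proof -
    have zq: "z t s \<in> prox_set \<eta> R (q t s)" using z_step[OF s] unfolding q_def .
    show ?thesis using prox_subgrad[OF _ _ eta_pos zq] R_pcc by simp
  qed
  have zx: "(norm (z t s - xstar))\<^sup>2 \<le> (q t s - qs) \<bullet> (z t s - xstar)" if s: "s \<in> space Mprob" for t s
  proof (rule prox_pair[OF eta_pos])
    have "0 \<le> ((1/\<eta>) *\<^sub>R (q t s - z t s) - rstar) \<bullet> (z t s - xstar)"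
      using zsub[OF s] Rprops by (intro subgrad_mono[of R]) auto
    then show "0 \<le> ((1/\<eta>) *\<^sub>R (q t s - z t s) - (1/\<eta>) *\<^sub>R (qs - xstar)) \<bullet> (z t s - xstar)"
      using rstar_eq by simp
  qed
  have zlip: "dist (z t s1) (z t s2) \<le> dist (q t s1) (q t s2)"
    if s: "s1 \<in> space Mprob" "s2 \<in> space Mprob" for t s1 s2
  proof -
    have "(norm (z t s1 - z t s2))\<^sup>2 \<le> (q t s1 - q t s2) \<bullet> (z t s1 - z t s2)"
    proof (rule prox_pair[OF eta_pos])
      show "0 \<le> ((1/\<eta>) *\<^sub>R (q t s1 - z t s1) - (1/\<eta>) *\<^sub>R (q t s2 - z t s2)) \<bullet> (z t s1 - z t s2)"
        using zsub[OF s(1)] zsub[OF s(2)] by (intro subgrad_mono[of R]) auto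
    qed
    then show ?thesis unfolding dist_norm by (rule sq_le_dot)
  qed
  have z_meas[measurable]: "z t \<in> borel_measurable (Fil t)" for t
    by (rule lipschitz_measurable[OF q_meas]) (use zlip sp in auto)
  have L2x: "L2 Mprob (x t)" for t using x_sq mF[OF x_meas] unfolding L2_def by auto
  have L2v: "L2 Mprob (v t)" for t using v_sq mF[OF v_meas] unfolding L2_def by auto
  have L2y: "L2 Mprob (y t j)" for t j using y_sq mF[OF y_meas] unfolding L2_def by auto
  have L2c: "L2 Mprob (\<lambda>s. c)" for c :: 'd using L2_const[OF fin] .
  have L2ybar: "L2 Mprob (ybar t)" for t
  proof -
    have "L2 Mprob (\<lambda>s. (1/real m) *\<^sub>R (\<Sum>j\<in>{1..m}. y t j s))"
      by (intro L2_scaleR L2_sum[OF fin] L2y) auto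
    then show ?thesis by (rule L2_cong[rotated]) (use ybar_eq in auto)
  qed
  have L2q: "L2 Mprob (q t)" for t
    unfolding q_def by (intro L2_diff L2_scaleR L2x L2v L2ybar)
  have L2z: "L2 Mprob (z t)" for t
  proof -
    have "L2 Mprob (\<lambda>s. z t s - xstar)"
    proof (rule L2_dom)
      show "L2 Mprob (\<lambda>s. q t s - qs)" by (intro L2_diff L2q L2c)
      show "(\<lambda>s. z t s - xstar) \<in> borel_measurable Mprob" using mF[OF z_meas] by measurable
      show "norm (z t s - xstar) \<le> norm (q t s - qs)" if "s \<in> space Mprob" for s
        using zx[OF that] by (rule sq_le_dot)
    qed
    then show ?thesis using L2_add[OF _ L2c, of "\<lambda>s. z t s - xstar" xstar] by simp
  qed

  define psi where "psi t k s = 2 * ek k * ((z t s - xstar) \<bullet> (y t k s - ystar k))" for t k s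
  define Aset where "Aset t k = {s \<in> space Mprob. J t s = k}" for t k
  define e where "e t s = (x t s - \<eta> *\<^sub>R v t s) - (xstar - \<eta> *\<^sub>R gradf xstar)" for t s
  have pointwise: "(norm (x (Suc t) s - xstar))\<^sup>2 + (\<Sum>k\<in>{1..m}. (ek k)\<^sup>2 * (norm (y (Suc t) k s - ystar k))\<^sup>2)
     \<le> (norm (e t s))\<^sup>2 + (\<Sum>k\<in>{1..m}. (ek k)\<^sup>2 * (norm (y t k s - ystar k))\<^sup>2)
       + (\<Sum>k\<in>{1..m}. psi t k s * indicator (Aset t k) s - p k * psi t k s)"
    if s: "s \<in> space Mprob" for t s
  proof -
    define j where "j = J t s"
    have j: "j \<in> {1..m}" using J_range[OF s] unfolding j_def .
    define c where "c = ek j"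
    have c: "0 < c" using ek_pos[OF j] unfolding c_def .
    define xp where "xp = x (Suc t) s"
    define zz where "zz = z t s"
    define yj where "yj = y t j s"
    define yp where "yp = y (Suc t) j s"
    have xsub: "xp \<in> prox_set c (g j) (zz + c *\<^sub>R yj)"
      using x_step[OF s] unfolding xp_def zz_def yj_def c_def ek_def j_def .
    have yp: "yp = yj + (1/c) *\<^sub>R (zz - xp)"
      using y_step[OF s j] unfolding yp_def yj_def zz_def xp_def c_def ek_def j_def by simp
    have gj: "proper_fun (g j)" "convex_fun (g j)" using g_pcc[OF j] by auto
    have ps: "g j xp \<noteq> \<infinity> \<and> g j xp \<noteq> -\<infinity> \<and> (\<forall>w. g j xp + ereal (((1/c) *\<^sub>R (zz + c *\<^sub>R yj - xp)) \<bullet> (w - xp)) \<le> g j w)"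
      using prox_subgrad[OF gj c xsub] by simp
    have g1: "(1/c) *\<^sub>R (zz + c *\<^sub>R yj - xp) = yp"
      using c unfolding yp by (simp add: algebra_simps)
    have gs: "g j xstar \<noteq> \<infinity>" "g j xstar \<noteq> -\<infinity>" "\<And>w. g j xstar + ereal (ystar j \<bullet> (w - xstar)) \<le> g j w"
      using ystar_sub[OF j] gj(1) unfolding subgrad_def proper_fun_def by auto
    have mono: "0 \<le> (yp - ystar j) \<bullet> (xp - xstar)"
      using ps gs g1 by (intro subgrad_mono[of "g j"]) auto
    have ident: "(zz - xstar) + c *\<^sub>R (yj - ystar j) - c *\<^sub>R (yp - ystar j) = xp - xstar"
    proof -
      have "c *\<^sub>R yp = c *\<^sub>R yj + (zz - xp)" using c unfolding yp by (simp add: scaleR_add_right)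
      then show ?thesis by (simp add: scaleR_diff_right algebra_simps)
    qed
    have xa: "(norm (xp - xstar))\<^sup>2 + c\<^sup>2 * (norm (yp - ystar j))\<^sup>2
       \<le> (norm (zz - xstar))\<^sup>2 + 2 * c * ((zz - xstar) \<bullet> (yj - ystar j)) + c\<^sup>2 * (norm (yj - ystar j))\<^sup>2"
      using xstep_alg[of "zz - xstar" c "yj - ystar j" "yp - ystar j"] mono c unfolding ident
      by (simp add: inner_commute)
    have sumch: "(\<Sum>k\<in>{1..m}. (ek k)\<^sup>2 * (norm (y (Suc t) k s - ystar k))\<^sup>2)
       = (\<Sum>k\<in>{1..m}. (ek k)\<^sup>2 * (norm (y t k s - ystar k))\<^sup>2) + (c\<^sup>2 * (norm (yp - ystar j))\<^sup>2 - c\<^sup>2 * (norm (yj - ystar j))\<^sup>2)"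
    proof -
      have "(\<Sum>k\<in>{1..m}. (ek k)\<^sup>2 * (norm (y (Suc t) k s - ystar k))\<^sup>2)
         = (\<Sum>k\<in>{1..m}. (ek k)\<^sup>2 * (norm (y t k s - ystar k))\<^sup>2 + (if k = j then c\<^sup>2 * (norm (yp - ystar j))\<^sup>2 - c\<^sup>2 * (norm (yj - ystar j))\<^sup>2 else 0))"
        by (intro sum.cong) (auto simp: y_step[OF s] j_def c_def yp_def yj_def)
      also have "\<dots> = (\<Sum>k\<in>{1..m}. (ek k)\<^sup>2 * (norm (y t k s - ystar k))\<^sup>2) + (c\<^sup>2 * (norm (yp - ystar j))\<^sup>2 - c\<^sup>2 * (norm (yj - ystar j))\<^sup>2)"
        using j by (simp add: sum.distrib)
      finally show ?thesis .
    qed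
    have psiJ: "(\<Sum>k\<in>{1..m}. psi t k s * indicator (Aset t k) s) = 2 * c * ((zz - xstar) \<bullet> (yj - ystar j))"
    proof -
      have "(\<Sum>k\<in>{1..m}. psi t k s * indicator (Aset t k) s) = (\<Sum>k\<in>{1..m}. if k = j then psi t j s else 0)"
        by (intro sum.cong) (auto simp: Aset_def j_def s)
      also have "\<dots> = psi t j s" using j by simp
      finally show ?thesis unfolding psi_def c_def zz_def yj_def .
    qed
    have avg: "(\<Sum>k\<in>{1..m}. p k * psi t k s) = 2 * \<eta> * ((zz - xstar) \<bullet> (ybar t s - ys))"
    proof -
      have "ybar t s - ys = (1 / real m) *\<^sub>R (\<Sum>k\<in>{1..m}. y t k s - ystar k)"
        using ybar_eq[OF s] unfolding ys_def by (simp add: sum_subtractf scaleR_diff_right)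
      then have "(zz - xstar) \<bullet> (ybar t s - ys) = (1 / real m) * (\<Sum>k\<in>{1..m}. (zz - xstar) \<bullet> (y t k s - ystar k))"
        by (simp add: inner_sum_right)
      moreover have "(\<Sum>k\<in>{1..m}. p k * psi t k s) = (\<Sum>k\<in>{1..m}. (2 * \<eta> / real m) * ((zz - xstar) \<bullet> (y t k s - ystar k)))"
      proof (intro sum.cong refl)
        fix k assume "k \<in> {1..m}"
        then have "p k \<noteq> 0" using p_pos by force
        then show "p k * psi t k s = (2 * \<eta> / real m) * ((zz - xstar) \<bullet> (y t k s - ystar k))"
          using m0 by (simp add: psi_def ek_def zz_def)
      qed
      ultimately show ?thesis by (simp add: sum_distrib_left[symmetric] sum_divide_distrib[symmetric])
    qed
    have zst: "(norm (zz - xstar))\<^sup>2 + 2 * \<eta> * ((zz - xstar) \<bullet> (ybar t s - ys)) \<le> (norm (e t s))\<^sup>2"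
    proof -
      have ed: "e t s - (q t s - qs) = \<eta> *\<^sub>R (ybar t s - ys)"
        unfolding e_def q_def qs_def ws_def by (simp add: algebra_simps)
      have "(norm (zz - xstar))\<^sup>2 + 2 * ((zz - xstar) \<bullet> (e t s - (q t s - qs))) \<le> (norm (e t s))\<^sup>2"
        using zx[OF s] unfolding zz_def by (intro zstep_alg) auto
      then show ?thesis unfolding ed by simp
    qed
    have "(\<Sum>k\<in>{1..m}. psi t k s * indicator (Aset t k) s - p k * psi t k s)
        = (\<Sum>k\<in>{1..m}. psi t k s * indicator (Aset t k) s) - (\<Sum>k\<in>{1..m}. p k * psi t k s)"
      by (simp add: sum_subtractf)
    then show ?thesis using xa sumch psiJ avg zst unfolding xp_def yp_def by linarith
  qed

  have sqI: "integrable Mprob (\<lambda>s. (norm (f s - c))\<^sup>2)" if "L2 Mprob f" for f and c :: 'd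
    using L2_diff[OF that L2c[of c]] unfolding L2_def by auto
  have psi_meas[measurable]: "psi t k \<in> borel_measurable (Fil t)" for t k
    unfolding psi_def by measurable
  have psi_int: "integrable Mprob (psi t k)" for t k
  proof -
    have "integrable Mprob (\<lambda>s. (z t s - xstar) \<bullet> (y t k s - ystar k))"
      by (intro L2_inner L2_diff L2z L2y L2c)
    then show ?thesis unfolding psi_def by simp
  qed
  have Aset_sets: "Aset t k \<in> sets Mprob" for t k
  proof -
    have "J t -` {k} \<inter> space (Fil (Suc t)) \<in> sets (Fil (Suc t))"
      using J_meas[of t] by (rule measurable_sets) simp
    then have "Aset t k \<in> sets (Fil (Suc t))" unfolding Aset_def using sp by (simp add: vimage_def Int_def conj_commute)
    then show ?thesis using Fil_sub[of "Suc t"] unfolding subalgebra_def by auto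
  qed
  have psiA_int: "integrable Mprob (\<lambda>s. psi t k s * indicator (Aset t k) s)" for t k
    using integrable_real_mult_indicator[OF Aset_sets psi_int] .
  have psiA_exp: "(\<integral>s. psi t k s * indicator (Aset t k) s \<partial>Mprob) = p k * (\<integral>s. psi t k s \<partial>Mprob)"
    if k: "k \<in> {1..m}" for t k
  proof (rule exp_indep[OF prob Fil_sub Aset_sets])
    show "measure Mprob (B \<inter> Aset t k) = measure Mprob B * p k" if "B \<in> sets (Fil t)" for B
      using J_indep[OF that k] unfolding Aset_def .
    show "0 \<le> p k" using p_pos[OF k] by simp
  qed simp
  define Phi where "Phi t = (\<integral>s. (norm (x t s - xstar))\<^sup>2 \<partial>Mprob)
      + (\<Sum>k\<in>{1..m}. (ek k)\<^sup>2 * (\<integral>s. (norm (y t k s - ystar k))\<^sup>2 \<partial>Mprob))" for t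
  have step: "Phi (Suc t) \<le> (\<integral>s. (norm (e t s))\<^sup>2 \<partial>Mprob)
      + (\<Sum>k\<in>{1..m}. (ek k)\<^sup>2 * (\<integral>s. (norm (y t k s - ystar k))\<^sup>2 \<partial>Mprob))" for t
  proof -
    have ie: "integrable Mprob (\<lambda>s. (norm (e t s))\<^sup>2)"
      unfolding e_def by (intro sqI L2_diff L2x L2_scaleR L2v)
    have iL: "integrable Mprob (\<lambda>s. (norm (x (Suc t) s - xstar))\<^sup>2 + (\<Sum>k\<in>{1..m}. (ek k)\<^sup>2 * (norm (y (Suc t) k s - ystar k))\<^sup>2))"
      by (intro Bochner_Integration.integrable_add Bochner_Integration.integrable_sum integrable_mult_right sqI L2x L2y)
    have iR1: "integrable Mprob (\<lambda>s. (norm (e t s))\<^sup>2 + (\<Sum>k\<in>{1..m}. (ek k)\<^sup>2 * (norm (y t k s - ystar k))\<^sup>2))"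
      by (intro Bochner_Integration.integrable_add Bochner_Integration.integrable_sum integrable_mult_right sqI L2x L2y ie)
    have iR2: "integrable Mprob (\<lambda>s. \<Sum>k\<in>{1..m}. psi t k s * indicator (Aset t k) s - p k * psi t k s)"
      by (intro Bochner_Integration.integrable_sum Bochner_Integration.integrable_diff integrable_mult_right psiA_int psi_int)
    have "(\<integral>s. (norm (x (Suc t) s - xstar))\<^sup>2 + (\<Sum>k\<in>{1..m}. (ek k)\<^sup>2 * (norm (y (Suc t) k s - ystar k))\<^sup>2) \<partial>Mprob)
       \<le> (\<integral>s. ((norm (e t s))\<^sup>2 + (\<Sum>k\<in>{1..m}. (ek k)\<^sup>2 * (norm (y t k s - ystar k))\<^sup>2))
          + (\<Sum>k\<in>{1..m}. psi t k s * indicator (Aset t k) s - p k * psi t k s) \<partial>Mprob)"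
      using iL Bochner_Integration.integrable_add[OF iR1 iR2] pointwise
      by (intro Bochner_Integration.integral_mono) (auto simp: add.assoc)
    also have "\<dots> = (\<integral>s. (norm (e t s))\<^sup>2 + (\<Sum>k\<in>{1..m}. (ek k)\<^sup>2 * (norm (y t k s - ystar k))\<^sup>2) \<partial>Mprob)
          + (\<integral>s. (\<Sum>k\<in>{1..m}. psi t k s * indicator (Aset t k) s - p k * psi t k s) \<partial>Mprob)"
      by (rule Bochner_Integration.integral_add[OF iR1 iR2])
    also have "(\<integral>s. (\<Sum>k\<in>{1..m}. psi t k s * indicator (Aset t k) s - p k * psi t k s) \<partial>Mprob) = 0"
    proof -
      have "(\<integral>s. (\<Sum>k\<in>{1..m}. psi t k s * indicator (Aset t k) s - p k * psi t k s) \<partial>Mprob)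
          = (\<Sum>k\<in>{1..m}. (\<integral>s. psi t k s * indicator (Aset t k) s - p k * psi t k s \<partial>Mprob))"
        by (intro Bochner_Integration.integral_sum Bochner_Integration.integrable_diff integrable_mult_right psiA_int psi_int)
      also have "\<dots> = (\<Sum>k\<in>{1..m}. 0)"
      proof (intro sum.cong refl)
        fix k assume k: "k \<in> {1..m}"
        have "(\<integral>s. psi t k s * indicator (Aset t k) s - p k * psi t k s \<partial>Mprob)
            = (\<integral>s. psi t k s * indicator (Aset t k) s \<partial>Mprob) - (\<integral>s. p k * psi t k s \<partial>Mprob)"
          by (intro Bochner_Integration.integral_diff integrable_mult_right psiA_int psi_int)
        then show "(\<integral>s. psi t k s * indicator (Aset t k) s - p k * psi t k s \<partial>Mprob) = 0"
          using psiA_exp[OF k] by simp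
      qed
      finally show ?thesis by simp
    qed
    also have "(\<integral>s. (norm (e t s))\<^sup>2 + (\<Sum>k\<in>{1..m}. (ek k)\<^sup>2 * (norm (y t k s - ystar k))\<^sup>2) \<partial>Mprob)
        = (\<integral>s. (norm (e t s))\<^sup>2 \<partial>Mprob) + (\<Sum>k\<in>{1..m}. (ek k)\<^sup>2 * (\<integral>s. (norm (y t k s - ystar k))\<^sup>2 \<partial>Mprob))"
      by (subst Bochner_Integration.integral_add)
         (auto intro!: Bochner_Integration.integrable_sum integrable_mult_right sqI L2y ie
               simp: Bochner_Integration.integral_sum[OF integrable_mult_right[OF sqI[OF L2y]]])
    also have "(\<integral>s. (norm (x (Suc t) s - xstar))\<^sup>2 + (\<Sum>k\<in>{1..m}. (ek k)\<^sup>2 * (norm (y (Suc t) k s - ystar k))\<^sup>2) \<partial>Mprob)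
        = Phi (Suc t)"
      unfolding Phi_def
      by (subst Bochner_Integration.integral_add)
         (auto intro!: Bochner_Integration.integrable_sum integrable_mult_right sqI L2y L2x
               simp: Bochner_Integration.integral_sum[OF integrable_mult_right[OF sqI[OF L2y]]])
    finally show ?thesis by simp
  qed

  have fcont: "continuous_on UNIV f"
    using f_grad by (intro continuous_at_imp_continuous_on ballI has_derivative_continuous) blast
  have f_meas[measurable]: "f \<in> borel_measurable borel" using borel_measurable_continuous_onI[OF fcont] .
  have conv: "\<And>a b. f b + gradf b \<bullet> (a - b) \<le> f a"
  proof -
    fix a b
    have "f b + gradf b \<bullet> (a - b) + \<mu> / 2 * (norm (a - b))\<^sup>2 \<le> f a" using f_sc unfolding strongly_convex_def by auto
    moreover have "0 \<le> \<mu> / 2 * (norm (a - b))\<^sup>2" using mu_nonneg by simp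
    ultimately show "f b + gradf b \<bullet> (a - b) \<le> f a" by linarith
  qed
  have D_nonneg: "\<And>a. 0 \<le> bregman f gradf a xstar" using conv unfolding bregman_def by (simp add: algebra_simps)
  have D_le: "\<And>a. bregman f gradf a xstar \<le> L / 2 * (norm (a - xstar))\<^sup>2"
  proof -
    fix a
    have "f a \<le> f xstar + gradf xstar \<bullet> (a - xstar) + L / 2 * (norm (a - xstar))\<^sup>2"
      using f_smooth unfolding L_smooth_def by blast
    then show "bregman f gradf a xstar \<le> L / 2 * (norm (a - xstar))\<^sup>2" unfolding bregman_def by linarith
  qed
  have xM[measurable]: "x t \<in> borel_measurable Mprob" for t using mF[OF x_meas] .
  have D_int: "integrable Mprob (\<lambda>s. bregman f gradf (x t s) xstar)" for t
  proof (rule Bochner_Integration.integrable_bound)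
    show "integrable Mprob (\<lambda>s. L / 2 * (norm (x t s - xstar))\<^sup>2)" by (intro integrable_mult_right sqI L2x)
    show "(\<lambda>s. bregman f gradf (x t s) xstar) \<in> borel_measurable Mprob" unfolding bregman_def by measurable
    show "AE s in Mprob. norm (bregman f gradf (x t s) xstar) \<le> norm (L / 2 * (norm (x t s - xstar))\<^sup>2)"
      using D_nonneg D_le by (intro AE_I2) (metis abs_of_nonneg dual_order.trans real_norm_def abs_ge_self)
  qed
  define ED where "ED t = (\<integral>s. bregman f gradf (x t s) xstar \<partial>Mprob)" for t
  have lyap: "Phi (Suc t) + Mseq (Suc t) \<le> Phi t + Mseq t - om * \<eta> * ED t" for t
    using step[of t] cond_a[of t] unfolding e_def Phi_def ED_def by linarith
  have tele: "om * \<eta> * (\<Sum>k<t. ED k) \<le> (Phi 0 + Mseq 0) - (Phi t + Mseq t)" for t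
  proof (induction t)
    case 0 then show ?case by simp
  next
    case (Suc t) then show ?case using lyap[of t] by (simp add: distrib_left)
  qed
  have Phi_nonneg: "0 \<le> Phi t" for t
    unfolding Phi_def by (intro add_nonneg_nonneg sum_nonneg mult_nonneg_nonneg integral_nonneg) auto
  have Phi0: "Phi 0 = (norm (x0 - xstar))\<^sup>2 + (\<Sum>k\<in>{1..m}. (ek k)\<^sup>2 * (norm (y0 k - ystar k))\<^sup>2)"
  proof -
    have "(\<integral>s. (norm (x 0 s - xstar))\<^sup>2 \<partial>Mprob) = (\<integral>s. (norm (x0 - xstar))\<^sup>2 \<partial>Mprob)"
      by (intro Bochner_Integration.integral_cong) (auto simp: x_init)
    moreover have "(\<integral>s. (norm (y 0 k s - ystar k))\<^sup>2 \<partial>Mprob) = (\<integral>s. (norm (y0 k - ystar k))\<^sup>2 \<partial>Mprob)" if "k \<in> {1..m}" for k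
      by (intro Bochner_Integration.integral_cong) (use y_init that in auto)
    ultimately show ?thesis unfolding Phi_def using P.prob_space by simp
  qed
  have sumED: "om * \<eta> * (\<Sum>k<t. ED k) \<le> (norm (x0 - xstar))\<^sup>2 + Mseq 0 + (\<Sum>k\<in>{1..m}. (ek k)\<^sup>2 * (norm (y0 k - ystar k))\<^sup>2)" for t
    using tele[of t] Phi_nonneg[of t] M_nonneg[of t] Phi0 by linarith
  show ?thesis
  proof (intro allI impI)
    fix t :: nat assume t1: "1 \<le> t"
    then have t: "0 < t" by simp
    define L0 where "L0 = (norm (x0 - xstar))\<^sup>2 + Mseq 0 + (\<Sum>k\<in>{1..m}. (\<eta> / (real m * p k))\<^sup>2 * (norm (y0 k - ystar k))\<^sup>2)"
    have sED: "om * \<eta> * (\<Sum>k<t. ED k) \<le> L0" using sumED[of t] unfolding L0_def ek_def .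
    have "(\<integral>s. bregman f gradf ((1 / real t) *\<^sub>R (\<Sum>k<t. x k s)) xstar \<partial>Mprob)
        \<le> (\<integral>s. (1 / real t) * (\<Sum>k<t. bregman f gradf (x k s) xstar) \<partial>Mprob)"
    proof (rule integral_mono')
      show "integrable Mprob (\<lambda>s. (1 / real t) * (\<Sum>k<t. bregman f gradf (x k s) xstar))"
        by (intro integrable_mult_right Bochner_Integration.integrable_sum D_int)
      show "bregman f gradf ((1 / real t) *\<^sub>R (\<Sum>k<t. x k s)) xstar \<le> (1 / real t) * (\<Sum>k<t. bregman f gradf (x k s) xstar)" for s
        by (rule jensen_breg[OF conv t])
      show "0 \<le> (1 / real t) * (\<Sum>k<t. bregman f gradf (x k s) xstar)" for s
        using D_nonneg by (simp add: sum_nonneg)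
    qed
    also have "\<dots> = (1 / real t) * (\<Sum>k<t. ED k)"
      unfolding ED_def by (simp add: Bochner_Integration.integral_sum[OF D_int])
    also have "\<dots> \<le> 1 / (om * \<eta> * real t) * L0"
    proof -
      have "(\<Sum>k<t. ED k) \<le> L0 / (om * \<eta>)" using sED om_pos eta_pos by (simp add: field_simps)
      then show ?thesis using t om_pos eta_pos by (simp add: field_simps divide_right_mono)
    qed
    finally show "prob_space.expectation Mprob (\<lambda>s. bregman f gradf ((1 / real t) *\<^sub>R (\<Sum>k<t. x k s)) xstar)
        \<le> 1 / (om * \<eta> * real t) * ((norm (x0 - xstar))\<^sup>2 + Mseq 0
          + (\<Sum>k\<in>{1..m}. (\<eta> / (real m * p k))\<^sup>2 * (norm (y0 k - ystar k))\<^sup>2))"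
      unfolding L0_def .
  qed
qed

end
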